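(* Choose an orientation of every edge of $\Gamma$. Let $\mathcal{P}ol_\nu=\bigoplus_{\mathbf i\in{\rm Seq}(\nu)}\mathcal{P}ol_{\mathbf i}$, $\mathcal{P}ol_{\mathbf i}=\mathbb Z[x_1(\mathbf i),\dots,x_m(\mathbf i)]$, and let $s_k$ act by the ring isomorphism $\mathcal{P}ol_{\mathbf i}\to\mathcal{P}ol_{s_k\mathbf i}$ sending $x_a(\mathbf i)\mapsto x_a(s_k\mathbf i)$ for $a\ne k,k+1$, $x_k(\mathbf i)\mapsto x_{k+1}(s_k\mathbf i)$, $x_{k+1}(\mathbf i)\mapsto x_k(s_k\mathbf i)$. Define operators on $\mathcal{P}ol_\nu$: $1_{\mathbf i}$ is the projection onto $\mathcal{P}ol_{\mathbf i}$; $x_{k,\mathbf i}$ kills $\mathcal{P}ol_{\mathbf j}$ for $\mathbf j\ne\mathbf i$ and multiplies $f\in\mathcal{P}ol_{\mathbf i}$ by $x_k(\mathbf i)$; $\delta_{k,\mathbf i}$ kills $\mathcal{P}ol_{\mathbf j}$ for $\mathbf j\neq\mathbf i$ and sends $f\in\mathcal{P}ol_{\mathbf i}$ to: $s_kf$ if $i_k\cdot i_{k+1}=0$; $\frac{f-s_kf}{x_k(\mathbf i)-x_{k+1}(\mathbf i)}$ if $i_k=i_{k+1}$; $s_kf$ if $i_k\cdot i_{k+1}=-1$ and the edge is oriented from $i_{k+1}$ to $i_k$; $(x_k(s_k\mathbf i)+x_{k+1}(s_k\mathbf i))\,s_kf$ if $i_k\cdot i_{k+1}=-1$ and the edge is oriented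 from $i_k$ to $i_{k+1}$. Then these operators satisfy all defining relations of $R(\nu)$ (over $\Bbbk=\mathbb Z$), hence define a left $R(\nu)$-module structure on $\mathcal{P}ol_\nu$.
   Context: Fix a graph $\Gamma$ with vertex set $I$, without loops or multiple edges. Define a symmetric bilinear form on $\mathbb Z[I]$ by $i\cdot i=2$, $i\cdot j=-1$ if $i\neq j$ are joined by an edge, and $i\cdot j=0$ otherwise. For $\nu=\sum_{i\in I}\nu_i\, i\in\mathbb N[I]$ put $m=|\nu|=\sum_i\nu_i$ and let ${\rm Seq}(\nu)$ be the set of sequences $\mathbf i=i_1i_2\cdots i_m$ of vertices in which each $i\in I$ occurs exactly $\nu_i$ times. The symmetric group $S_m$ acts on ${\rm Seq}(\nu)$ by permuting positions; $s_k=(k,k+1)$ swaps $i_k$ and $i_{k+1}$. Over a commutative ground ring $\Bbbk$ (here $\mathbb Z$ or a field), $R(\nu)$ is the associative $\Bbbk$-algebra generated by elements $1_{\mathbf i}$ ($\mathbf i\in{\rm Seq}(\nu)$), $x_{k,\mathbf i}$ ($1\le k\le m$) and $\delta_{k,\mathbf i}$ ($1\le k\le m-1$), subject to the relations: (R1) $1_{\mathbf i}1_{\mathbf j}=\delta_{\mathbf i,\mathbf j}1_{\mathbf i}$, $\sum_{\mathbf i}1_{\mathbf i}=1$, $x_{k,\mathbf i}=1_{\mathbf i}x_{k,\mathbf i}1_{\mathbf i}$, $\delta_{k,\mathbf i}=1_{s_k\mathbf i}\delta_{k,\mathbf i}1_{\mathbf i}$; (R2) $x_{k,\mathbf i}x_{l,\mathbf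 i}=x_{l,\mathbf i}x_{k,\mathbf i}$; (R3) $\delta_{k,s_k\mathbf i}\delta_{k,\mathbf i}$ equals $0$ if $i_k=i_{k+1}$, equals $1_{\mathbf i}$ if $i_k\cdot i_{k+1}=0$, and equals $x_{k,\mathbf i}+x_{k+1,\mathbf i}$ if $i_k\cdot i_{k+1}=-1$; (R4) $\delta_{k,\mathbf i}x_{l,\mathbf i}=x_{l,s_k\mathbf i}\delta_{k,\mathbf i}$ for $l\ne k,k+1$; if $i_k\neq i_{k+1}$ then $\delta_{k,\mathbf i}x_{k,\mathbf i}=x_{k+1,s_k\mathbf i}\delta_{k,\mathbf i}$ and $\delta_{k,\mathbf i}x_{k+1,\mathbf i}=x_{k,s_k\mathbf i}\delta_{k,\mathbf i}$; if $i_k=i_{k+1}$ then $x_{k,\mathbf i}\delta_{k,\mathbf i}-\delta_{k,\mathbf i}x_{k+1,\mathbf i}=1_{\mathbf i}=\delta_{k,\mathbf i}x_{k,\mathbf i}-x_{k+1,\mathbf i}\delta_{k,\mathbf i}$; (R5) $\delta_{k,s_l\mathbf i}\delta_{l,\mathbf i}=\delta_{l,s_k\mathbf i}\delta_{k,\mathbf i}$ if $|k-l|>1$; (R6) $\delta_{k,s_{k+1}s_k\mathbf i}\delta_{k+1,s_k\mathbf i}\delta_{k,\mathbf i}-\delta_{k+1,s_ks_{k+1}\mathbf i}\delta_{k,s_{k+1}\mathbf i}\delta_{k+1,\mathbf i}$ equals $1_{\mathbf i}$ if $i_k=i_{k+2}$ and $i_k\cdot i_{k+1}=-1$, and equals $0$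 otherwise. $R(\nu)$ is graded by $\deg 1_{\mathbf i}=0$, $\deg x_{k,\mathbf i}=2$, $\deg\delta_{k,\mathbf i}=-i_k\cdot i_{k+1}$. $R(0)=\Bbbk$. Write ${}_{\mathbf j}R(\nu)_{\mathbf i}=1_{\mathbf j}R(\nu)1_{\mathbf i}$. *)

theory Defs
  imports Main "HOL-Library.Poly_Mapping" "HOL-Library.Function_Algebras"
begin

text \<open>Polynomials with integer coefficients in the variables x_1, x_2, ... :
  a monomial is a finitely supported exponent vector nat =>0 nat,
  a polynomial a finitely supported map from monomials to int.\<close>
type_synonym ipoly = "(nat \<Rightarrow>\<^sub>0 nat) \<Rightarrow>\<^sub>0 int"

definition Xv :: "nat \<Rightarrow> ipoly" where
  "Xv a = Poly_Mapping.single (Poly_Mapping.single a 1) 1"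

definition pvars :: "ipoly \<Rightarrow> nat set" where
  "pvars p = (\<Union>mon \<in> Poly_Mapping.keys p. Poly_Mapping.keys mon)"

definition swp :: "nat \<Rightarrow> nat \<Rightarrow> nat" where
  "swp k a = (if a = k then Suc k else if a = Suc k then k else a)"

definition spoly :: "nat \<Rightarrow> ipoly \<Rightarrow> ipoly" where
  "spoly k p = Poly_Mapping.map_key (\<lambda>mon. Poly_Mapping.map_key (swp k) mon) p"

definition ddiff :: "nat \<Rightarrow> ipoly \<Rightarrow> ipoly" where
  "ddiff k f = (THE g. f - spoly k f = (Xv k - Xv (Suc k)) * g)"

text \<open>Sequences are lists; position k (1 <= k <= m) is the list entry k-1.
  s_k on sequences swaps positions k and k+1.\<close>
definition ent :: "'v list \<Rightarrow> nat \<Rightarrow> 'v" where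
  "ent is k = is ! (k - 1)"

definition sseq :: "nat \<Rightarrow> 'v list \<Rightarrow> 'v list" where
  "sseq k is = is[k - 1 := is ! k, k := is ! (k - 1)]"

definition Seq :: "('v \<Rightarrow> nat) \<Rightarrow> 'v list set" where
  "Seq \<nu> = {is. \<forall>i. count_list is i = \<nu> i}"

definition dotp :: "('v \<Rightarrow> 'v \<Rightarrow> bool) \<Rightarrow> 'v \<Rightarrow> 'v \<Rightarrow> int" where
  "dotp E i j = (if i = j then 2 else if E i j then -1 else 0)"

text \<open>Elements of Pol_nu = (+)_{i in Seq nu} Pol_i are represented as functions
  F from sequences to polynomials, vanishing outside Seq nu; component F i
  is a polynomial in x_1(i), ..., x_m(i), the variable x_a(i) being Xv a.\<close>
definition Polnu :: "('v \<Rightarrow> nat) \<Rightarrow> nat \<Rightarrow> ('v list \<Rightarrow> ipoly) set" where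
  "Polnu \<nu> m = {F. (\<forall>j. j \<notin> Seq \<nu> \<longrightarrow> F j = 0) \<and> (\<forall>j. pvars (F j) \<subseteq> {1..m})}"

type_synonym 'v op = "('v list \<Rightarrow> ipoly) \<Rightarrow> ('v list \<Rightarrow> ipoly)"

definition one_op :: "'v list \<Rightarrow> 'v op" where
  "one_op i F = (\<lambda>j. if j = i then F i else 0)"

definition x_op :: "nat \<Rightarrow> 'v list \<Rightarrow> 'v op" where
  "x_op k i F = (\<lambda>j. if j = i then Xv k * F i else 0)"

text \<open>Or a b means: the edge {a,b} is oriented from a to b.\<close>
definition delta_poly :: "('v \<Rightarrow> 'v \<Rightarrow> bool) \<Rightarrow> ('v \<Rightarrow> 'v \<Rightarrow> bool) \<Rightarrow> nat \<Rightarrow> 'v list \<Rightarrow> ipoly \<Rightarrow> ipoly" where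
  "delta_poly E Or k i f =
     (if ent i k = ent i (Suc k) then ddiff k f
      else if dotp E (ent i k) (ent i (Suc k)) = 0 then spoly k f
      else if Or (ent i (Suc k)) (ent i k) then spoly k f
      else (Xv k + Xv (Suc k)) * spoly k f)"

definition delta_op :: "('v \<Rightarrow> 'v \<Rightarrow> bool) \<Rightarrow> ('v \<Rightarrow> 'v \<Rightarrow> bool) \<Rightarrow> nat \<Rightarrow> 'v list \<Rightarrow> 'v op" where
  "delta_op E Or k i F = (\<lambda>j. if j = sseq k i then delta_poly E Or k i (F i) else 0)"

end

theory Submission
  imports Defs "HOL-Library.Multiset"
begin

lemma "(x::ipoly) * y = 0 \<Longrightarrow> x = 0 \<or> y = 0" by simp

lemma swp_swp[simp]: "swp k (swp k a) = a" by (simp add: swp_def)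
lemma inj_swp[simp]: "inj (swp k)" by (metis injI swp_swp)

lemma lookup_map_key:
  assumes [transfer_rule]: "inj f" shows "Poly_Mapping.lookup (Poly_Mapping.map_key f p) x = Poly_Mapping.lookup p (f x)"
  by transfer simp

definition sm :: "nat \<Rightarrow> (nat \<Rightarrow>\<^sub>0 nat) \<Rightarrow> (nat \<Rightarrow>\<^sub>0 nat)" where
  "sm k mon = Poly_Mapping.map_key (swp k) mon"

lemma lookup_sm[simp]: "Poly_Mapping.lookup (sm k mon) a = Poly_Mapping.lookup mon (swp k a)"
  by (simp add: sm_def lookup_map_key)
lemma sm_sm[simp]: "sm k (sm k mon) = mon"
  by (rule poly_mapping_eqI) simp
lemma inj_sm[simp]: "inj (sm k)" by (metis injI sm_sm)
lemma sm_add[simp]: "sm k (a + b) = sm k a + sm k b"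
  by (rule poly_mapping_eqI) (simp add: lookup_add)
lemma sm_zero[simp]: "sm k 0 = 0"
  by (rule poly_mapping_eqI) simp
lemma sm_single[simp]: "sm k (Poly_Mapping.single a n) = Poly_Mapping.single (swp k a) n"
  by (rule poly_mapping_eqI) (auto simp: lookup_single when_def swp_def)

lemma spoly_alt: "spoly k p = Poly_Mapping.map_key (sm k) p"
  unfolding spoly_def sm_def by simp

lemma lookup_spoly[simp]: "Poly_Mapping.lookup (spoly k p) mon = Poly_Mapping.lookup p (sm k mon)"
  by (simp add: spoly_alt lookup_map_key)

lemma spoly_add[simp]: "spoly k (p + q) = spoly k p + spoly k q"
  by (rule poly_mapping_eqI) (simp add: lookup_add)
lemma spoly_diff[simp]: "spoly k (p - q) = spoly k p - spoly k q"
  by (rule poly_mapping_eqI) (simp add: lookup_minus)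
lemma spoly_uminus[simp]: "spoly k (- p) = - spoly k p"
  by (rule poly_mapping_eqI) simp
lemma spoly_zero[simp]: "spoly k 0 = 0"
  by (rule poly_mapping_eqI) simp
lemma spoly_spoly[simp]: "spoly k (spoly k p) = p"
  by (rule poly_mapping_eqI) simp
lemma spoly_single[simp]: "spoly k (Poly_Mapping.single mon c) = Poly_Mapping.single (sm k mon) c"
  by (rule poly_mapping_eqI) (auto simp: lookup_single when_def)
lemma spoly_one[simp]: "spoly k 1 = 1"
  by (metis sm_zero spoly_single single_one)
lemma spoly_Xv[simp]: "spoly k (Xv a) = Xv (swp k a)"
  by (simp add: Xv_def)

lemma spoly_mult[simp]: "spoly k (p * q) = spoly k p * spoly k q"
proof -
  have "spoly k (frag_of a * q) = spoly k (frag_of a) * spoly k q" for a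
    using subset_UNIV
  proof (induction q rule: frag_induction)
    case (one x) then show ?case by (simp add: mult_single)
  next
    case (diff a b) then show ?case by (simp add: algebra_simps)
  qed auto
  note A = this
  show ?thesis
    using subset_UNIV
  proof (induction p rule: frag_induction)
    case (diff a b) then show ?case by (simp add: algebra_simps)
  qed (auto simp: A)
qed

lemma spoly_power[simp]: "spoly k (p ^ n) = spoly k p ^ n"
  by (induction n) auto

lemma pvars_add: "pvars (p + q) \<subseteq> pvars p \<union> pvars q"
proof
  fix a assume "a \<in> pvars (p + q)"
  then obtain mon where "mon \<in> Poly_Mapping.keys (p+q)" "a \<in> Poly_Mapping.keys mon" unfolding pvars_def by blast
  moreover have "Poly_Mapping.keys (p+q) \<subseteq> Poly_Mapping.keys p \<union> Poly_Mapping.keys q" by (rule keys_add)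
  ultimately show "a \<in> pvars p \<union> pvars q" unfolding pvars_def by blast
qed
lemma pvars_diff: "pvars (p - q) \<subseteq> pvars p \<union> pvars q"
proof
  fix a assume "a \<in> pvars (p - q)"
  then obtain mon where "mon \<in> Poly_Mapping.keys (p-q)" "a \<in> Poly_Mapping.keys mon" unfolding pvars_def by blast
  moreover have "Poly_Mapping.keys (p-q) \<subseteq> Poly_Mapping.keys p \<union> Poly_Mapping.keys q" by (rule keys_diff)
  ultimately show "a \<in> pvars p \<union> pvars q" unfolding pvars_def by blast
qed
lemma pvars_uminus[simp]: "pvars (- p) = pvars p"
  unfolding pvars_def by simp
lemma pvars_zero[simp]: "pvars 0 = {}" unfolding pvars_def by simp
lemma pvars_one[simp]: "pvars 1 = {}" unfolding pvars_def by simp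
lemma pvars_mult: "pvars (p * q) \<subseteq> pvars p \<union> pvars q"
proof
  fix a assume "a \<in> pvars (p * q)"
  then obtain mon where m: "mon \<in> Poly_Mapping.keys (p*q)" "a \<in> Poly_Mapping.keys mon" unfolding pvars_def by blast
  have "mon \<in> {a + b | a b. a \<in> Poly_Mapping.keys p \<and> b \<in> Poly_Mapping.keys q}"
    using m(1) keys_mult[of p q] by (rule subsetD[rotated])
  then obtain x y where xy: "mon = x + y" "x \<in> Poly_Mapping.keys p" "y \<in> Poly_Mapping.keys q" by blast
  have "Poly_Mapping.keys (x + y) \<subseteq> Poly_Mapping.keys x \<union> Poly_Mapping.keys y" by (rule keys_add)
  with m(2) xy have "a \<in> Poly_Mapping.keys x \<or> a \<in> Poly_Mapping.keys y" by blast
  with xy show "a \<in> pvars p \<union> pvars q" unfolding pvars_def by blast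
qed
lemma pvars_power: "pvars (p ^ n) \<subseteq> pvars p"
proof (induction n)
  case (Suc n) then show ?case using pvars_mult[of p "p^n"] by auto
qed simp
lemma pvars_Xv[simp]: "pvars (Xv a) = {a}"
  unfolding pvars_def Xv_def by simp
lemma pvars_single: "pvars (Poly_Mapping.single mon c) \<subseteq> Poly_Mapping.keys mon"
  unfolding pvars_def by auto
lemma pvars_spoly: "pvars (spoly k p) \<subseteq> swp k ` pvars p"
proof
  fix a assume "a \<in> pvars (spoly k p)"
  then obtain mon where m: "mon \<in> Poly_Mapping.keys (spoly k p)" "a \<in> Poly_Mapping.keys mon" unfolding pvars_def by blast
  have "sm k mon \<in> Poly_Mapping.keys p" using m(1) by (simp add: in_keys_iff)
  moreover have "swp k a \<in> Poly_Mapping.keys (sm k mon)" using m(2) by (simp add: in_keys_iff)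
  ultimately have "swp k a \<in> pvars p" unfolding pvars_def by blast
  then show "a \<in> swp k ` pvars p" by (metis image_eqI swp_swp)
qed

lemma Xv_power: "Xv a ^ n = Poly_Mapping.single (Poly_Mapping.single a n) 1"
  by (induction n) (simp_all add: Xv_def mult_single flip: single_add)

lemma Xv_inj: "Xv a = Xv b \<longleftrightarrow> a = b"
proof
  assume "Xv a = Xv b"
  then have "Poly_Mapping.lookup (Xv a) (Poly_Mapping.single a 1) = Poly_Mapping.lookup (Xv b) (Poly_Mapping.single a 1)" by simp
  then have "Poly_Mapping.single b (1::nat) = Poly_Mapping.single a 1" by (simp add: Xv_def lookup_single when_def split: if_splits)
  then have "Poly_Mapping.lookup (Poly_Mapping.single b (1::nat)) a = Poly_Mapping.lookup (Poly_Mapping.single a 1) a" by simp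
  then show "a = b" by (simp add: lookup_single when_def split: if_splits)
qed simp

lemma Xv_diff_nz: "a \<noteq> b \<Longrightarrow> Xv a - Xv b \<noteq> 0"
  using Xv_inj by simp

lemma pow_diff_ex:
  "\<exists>g. Xv k ^ d - Xv (Suc k) ^ d = (Xv k - Xv (Suc k)) * g \<and> pvars g \<subseteq> {k, Suc k}"
proof (induction d)
  case 0 then show ?case by (intro exI[of _ 0]) simp
next
  case (Suc d)
  then obtain g where g: "Xv k ^ d - Xv (Suc k) ^ d = (Xv k - Xv (Suc k)) * g" "pvars g \<subseteq> {k, Suc k}" by blast
  let ?g = "Xv k * g + Xv (Suc k) ^ d"
  have "Xv k ^ Suc d - Xv (Suc k) ^ Suc d = Xv k * (Xv k ^ d - Xv (Suc k) ^ d) + (Xv k - Xv (Suc k)) * Xv (Suc k) ^ d"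
    by (simp add: algebra_simps)
  also have "\<dots> = (Xv k - Xv (Suc k)) * ?g" by (simp add: g(1) algebra_simps)
  finally show ?case
    using g(2) pvars_add[of "Xv k * g" "Xv (Suc k) ^ d"] pvars_mult[of "Xv k" g] pvars_power[of "Xv (Suc k)" d]
    by (intro exI[of _ ?g]) auto
qed

lemma mon_diff_ex:
  "\<exists>g. Xv k ^ a * Xv (Suc k) ^ b - Xv (Suc k) ^ a * Xv k ^ b = (Xv k - Xv (Suc k)) * g \<and> pvars g \<subseteq> {k, Suc k}"
proof (cases "b \<le> a")
  case True
  then obtain d where d: "a = b + d" using le_Suc_ex by blast
  obtain g where g: "Xv k ^ d - Xv (Suc k) ^ d = (Xv k - Xv (Suc k)) * g" "pvars g \<subseteq> {k, Suc k}"
    using pow_diff_ex by blast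
  have "Xv k ^ a * Xv (Suc k) ^ b - Xv (Suc k) ^ a * Xv k ^ b = (Xv k * Xv (Suc k))^b * (Xv k ^ d - Xv (Suc k) ^ d)"
    by (simp add: d power_add power_mult_distrib algebra_simps)
  also have "\<dots> = (Xv k - Xv (Suc k)) * ((Xv k * Xv (Suc k))^b * g)" by (simp add: g(1) algebra_simps)
  finally show ?thesis using g(2) pvars_mult[of "(Xv k * Xv (Suc k))^b" g] pvars_power[of "Xv k * Xv (Suc k)" b]
      pvars_mult[of "Xv k" "Xv (Suc k)"]
    by (intro exI[of _ "(Xv k * Xv (Suc k))^b * g"]) auto
next
  case False
  then obtain d where d: "b = a + d" using le_Suc_ex nat_le_linear by blast
  obtain g where g: "Xv k ^ d - Xv (Suc k) ^ d = (Xv k - Xv (Suc k)) * g" "pvars g \<subseteq> {k, Suc k}"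
    using pow_diff_ex by blast
  have "Xv k ^ a * Xv (Suc k) ^ b - Xv (Suc k) ^ a * Xv k ^ b = - ((Xv k * Xv (Suc k))^a * (Xv k ^ d - Xv (Suc k) ^ d))"
    by (simp add: d power_add power_mult_distrib algebra_simps)
  also have "\<dots> = (Xv k - Xv (Suc k)) * (- ((Xv k * Xv (Suc k))^a * g))" by (simp add: g(1) algebra_simps)
  finally show ?thesis using g(2) pvars_mult[of "(Xv k * Xv (Suc k))^a" g] pvars_power[of "Xv k * Xv (Suc k)" a]
      pvars_mult[of "Xv k" "Xv (Suc k)"]
    by (intro exI[of _ "- ((Xv k * Xv (Suc k))^a * g)"]) auto
qed

lemma mon_decomp:
  fixes mon :: "nat \<Rightarrow>\<^sub>0 nat"
  obtains r where "mon = Poly_Mapping.single k (Poly_Mapping.lookup mon k) + Poly_Mapping.single (Suc k) (Poly_Mapping.lookup mon (Suc k)) + r"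
    "Poly_Mapping.lookup r k = 0" "Poly_Mapping.lookup r (Suc k) = 0" "Poly_Mapping.keys r \<subseteq> Poly_Mapping.keys mon"
proof
  let ?r = "mon - Poly_Mapping.single k (Poly_Mapping.lookup mon k) - Poly_Mapping.single (Suc k) (Poly_Mapping.lookup mon (Suc k))"
  show "mon = Poly_Mapping.single k (Poly_Mapping.lookup mon k) + Poly_Mapping.single (Suc k) (Poly_Mapping.lookup mon (Suc k)) + ?r"
    by (rule poly_mapping_eqI) (auto simp: lookup_add lookup_minus lookup_single when_def)
  show "Poly_Mapping.lookup ?r k = 0" "Poly_Mapping.lookup ?r (Suc k) = 0"
    by (simp_all add: lookup_minus lookup_single when_def)
  show "Poly_Mapping.keys ?r \<subseteq> Poly_Mapping.keys mon"
  proof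
    fix x assume "x \<in> Poly_Mapping.keys ?r"
    then have "Poly_Mapping.lookup ?r x \<noteq> 0" by (simp add: in_keys_iff)
    then have "Poly_Mapping.lookup mon x \<noteq> 0" by (simp add: lookup_minus)
    then show "x \<in> Poly_Mapping.keys mon" by (simp add: in_keys_iff)
  qed
qed

lemma ddiff_ex_mon:
  assumes "Poly_Mapping.keys mon \<subseteq> V"
  shows "\<exists>g. frag_of mon - spoly k (frag_of mon) = (Xv k - Xv (Suc k)) * g \<and> pvars g \<subseteq> V \<union> {k, Suc k}"
proof -
  obtain r where r: "mon = Poly_Mapping.single k (Poly_Mapping.lookup mon k) + Poly_Mapping.single (Suc k) (Poly_Mapping.lookup mon (Suc k)) + r"
    "Poly_Mapping.lookup r k = 0" "Poly_Mapping.lookup r (Suc k) = 0" "Poly_Mapping.keys r \<subseteq> Poly_Mapping.keys mon"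
    using mon_decomp by blast
  define a where "a = Poly_Mapping.lookup mon k"
  define b where "b = Poly_Mapping.lookup mon (Suc k)"
  have fm: "frag_of mon = Xv k ^ a * Xv (Suc k) ^ b * frag_of r"
    unfolding a_def b_def Xv_power mult_single by (simp flip: r(1))
  have smr: "sm k r = r"
  proof (rule poly_mapping_eqI)
    fix x show "Poly_Mapping.lookup (sm k r) x = Poly_Mapping.lookup r x"
      using r(2,3) by (simp add: swp_def)
  qed
  have sfm: "spoly k (frag_of mon) = Xv (Suc k) ^ a * Xv k ^ b * frag_of r"
    by (subst fm) (simp add: smr swp_def)
  obtain g where g: "Xv k ^ a * Xv (Suc k) ^ b - Xv (Suc k) ^ a * Xv k ^ b = (Xv k - Xv (Suc k)) * g" "pvars g \<subseteq> {k, Suc k}"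
    using mon_diff_ex by blast
  have "frag_of mon - spoly k (frag_of mon) = (Xv k ^ a * Xv (Suc k) ^ b - Xv (Suc k) ^ a * Xv k ^ b) * frag_of r"
    by (subst sfm, subst fm, simp add: algebra_simps)
  also have "\<dots> = (Xv k - Xv (Suc k)) * (g * frag_of r)" by (simp add: g(1))
  finally have "frag_of mon - spoly k (frag_of mon) = (Xv k - Xv (Suc k)) * (g * frag_of r)" .
  moreover have "pvars (g * frag_of r) \<subseteq> V \<union> {k, Suc k}"
    using pvars_mult[of g "frag_of r"] pvars_single[of r 1] g(2) r(4) assms by blast
  ultimately show ?thesis by blast
qed

lemma ddiff_ex:
  assumes "pvars f \<subseteq> V"
  shows "\<exists>g. f - spoly k f = (Xv k - Xv (Suc k)) * g \<and> pvars g \<subseteq> V \<union> {k, Suc k}"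
proof -
  have "Poly_Mapping.keys f \<subseteq> {mon. Poly_Mapping.keys mon \<subseteq> V}" using assms unfolding pvars_def by blast
  then show ?thesis
  proof (induction f rule: frag_induction)
    case zero then show ?case by (intro exI[of _ 0]) simp
  next
    case (one x) then show ?case using ddiff_ex_mon by blast
  next
    case (diff a b)
    then obtain g1 g2 where "a - spoly k a = (Xv k - Xv (Suc k)) * g1" "pvars g1 \<subseteq> V \<union> {k, Suc k}"
      "b - spoly k b = (Xv k - Xv (Suc k)) * g2" "pvars g2 \<subseteq> V \<union> {k, Suc k}" by blast
    have "(a - b) - spoly k (a - b) = (a - spoly k a) - (b - spoly k b)" by simp
    also have "\<dots> = (Xv k - Xv (Suc k)) * g1 - (Xv k - Xv (Suc k)) * g2"
      using \<open>a - spoly k a = _\<close> \<open>b - spoly k b = _\<close> by (simp only:)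
    also have "\<dots> = (Xv k - Xv (Suc k)) * (g1 - g2)" by (simp add: right_diff_distrib)
    finally have "(a - b) - spoly k (a - b) = (Xv k - Xv (Suc k)) * (g1 - g2)" .
    then show ?case using pvars_diff[of g1 g2] \<open>pvars g1 \<subseteq> _\<close> \<open>pvars g2 \<subseteq> _\<close>
      by (intro exI[of _ "g1 - g2"]) auto
  qed
qed

lemma ddiff_unique:
  assumes "(Xv k - Xv (Suc k)) * g = f - spoly k f"
  shows "ddiff k f = g"
  unfolding ddiff_def
proof (rule the_equality)
  show "f - spoly k f = (Xv k - Xv (Suc k)) * g" using assms by simp
  fix g' assume "f - spoly k f = (Xv k - Xv (Suc k)) * g'"
  with assms have "(Xv k - Xv (Suc k)) * g' = (Xv k - Xv (Suc k)) * g" by (simp only:)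
  moreover have "Xv k - Xv (Suc k) \<noteq> 0" using Xv_diff_nz[of k "Suc k"] by simp
  ultimately show "g' = g" by (simp only: mult_cancel_left) simp
qed

lemma ddiff_eq: "(Xv k - Xv (Suc k)) * ddiff k f = f - spoly k f"
proof -
  obtain g where "f - spoly k f = (Xv k - Xv (Suc k)) * g" using ddiff_ex[of f "pvars f" k] by blast
  then show ?thesis using ddiff_unique[of k g f] by simp
qed

lemma pvars_ddiff: "pvars (ddiff k f) \<subseteq> pvars f \<union> {k, Suc k}"
proof -
  obtain g where "f - spoly k f = (Xv k - Xv (Suc k)) * g" "pvars g \<subseteq> pvars f \<union> {k, Suc k}"
    using ddiff_ex[of f "pvars f" k] by blast
  then show ?thesis using ddiff_unique[of k g f] by simp
qed

lemma swp_k[simp]: "swp k k = Suc k" and swp_Sk[simp]: "swp k (Suc k) = k"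
  and swp_other[simp]: "a \<noteq> k \<Longrightarrow> a \<noteq> Suc k \<Longrightarrow> swp k a = a"
  by (auto simp: swp_def)

lemma spoly_braid: "spoly k (spoly (Suc k) (spoly k p)) = spoly (Suc k) (spoly k (spoly (Suc k) p))"
proof (rule poly_mapping_eqI)
  fix mon
  have "sm k (sm (Suc k) (sm k mon)) = sm (Suc k) (sm k (sm (Suc k) mon))"
    by (rule poly_mapping_eqI) (simp add: swp_def)
  then show "Poly_Mapping.lookup (spoly k (spoly (Suc k) (spoly k p))) mon =
    Poly_Mapping.lookup (spoly (Suc k) (spoly k (spoly (Suc k) p))) mon" by simp
qed

lemma spoly_comm: "Suc k < l \<or> Suc l < k \<Longrightarrow> spoly k (spoly l p) = spoly l (spoly k p)"
proof (rule poly_mapping_eqI)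
  fix mon assume "Suc k < l \<or> Suc l < k"
  then have "sm l (sm k mon) = sm k (sm l mon)"
    by (intro poly_mapping_eqI) (auto simp: swp_def)
  then show "Poly_Mapping.lookup (spoly k (spoly l p)) mon = Poly_Mapping.lookup (spoly l (spoly k p)) mon" by simp
qed

lemma spoly_inj: "spoly k p = spoly k q \<longleftrightarrow> p = q"
  by (metis spoly_spoly)

lemma cancel_nz: "(c::ipoly) \<noteq> 0 \<Longrightarrow> c * x = c * y \<Longrightarrow> x = y" by simp

lemma XX_nz: "a \<noteq> b \<Longrightarrow> Xv a - Xv b \<noteq> 0" by (rule Xv_diff_nz)

lemma ddiff_sym: "spoly k (ddiff k f) = ddiff k f"
proof -
  have e: "(Xv k - Xv (Suc k)) * ddiff k f = f - spoly k f" by (rule ddiff_eq)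
  have e': "(Xv (Suc k) - Xv k) * spoly k (ddiff k f) = spoly k f - f"
    using arg_cong[OF e, of "spoly k"] by simp
  have "(Xv k - Xv (Suc k)) * spoly k (ddiff k f) = (Xv k - Xv (Suc k)) * ddiff k f"
    using e e' by algebra
  then show ?thesis using XX_nz[of k "Suc k"] by simp
qed

lemma ddiff_add: "ddiff k (f + g) = ddiff k f + ddiff k g"
proof (rule ddiff_unique)
  have e: "(Xv k - Xv (Suc k)) * ddiff k f = f - spoly k f" by (rule ddiff_eq)
  have e2: "(Xv k - Xv (Suc k)) * ddiff k g = g - spoly k g" by (rule ddiff_eq)
  show "(Xv k - Xv (Suc k)) * (ddiff k f + ddiff k g) = f + g - spoly k (f + g)"
    using e e2 by simp algebra
qed

lemma ddiff_diff: "ddiff k (f - g) = ddiff k f - ddiff k g"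
proof (rule ddiff_unique)
  have e: "(Xv k - Xv (Suc k)) * ddiff k f = f - spoly k f" by (rule ddiff_eq)
  have e2: "(Xv k - Xv (Suc k)) * ddiff k g = g - spoly k g" by (rule ddiff_eq)
  show "(Xv k - Xv (Suc k)) * (ddiff k f - ddiff k g) = f - g - spoly k (f - g)"
    using e e2 by simp algebra
qed

lemma ddiff_lin_sym: "spoly k c = c \<Longrightarrow> ddiff k (c * f) = c * ddiff k f"
proof (rule ddiff_unique)
  assume sc: "spoly k c = c"
  have e: "(Xv k - Xv (Suc k)) * ddiff k f = f - spoly k f" by (rule ddiff_eq)
  show "(Xv k - Xv (Suc k)) * (c * ddiff k f) = c * f - spoly k (c * f)"
    using e sc by simp algebra
qed

lemma ddiff_ddiff: "ddiff k (ddiff k f) = 0"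
  by (rule ddiff_unique) (simp add: ddiff_sym)

lemma ddiff_XSk: "ddiff k (Xv (Suc k) * f) = Xv k * ddiff k f - f"
proof (rule ddiff_unique)
  have e: "(Xv k - Xv (Suc k)) * ddiff k f = f - spoly k f" by (rule ddiff_eq)
  show "(Xv k - Xv (Suc k)) * (Xv k * ddiff k f - f) = Xv (Suc k) * f - spoly k (Xv (Suc k) * f)"
    using e by simp algebra
qed

lemma ddiff_Xk: "ddiff k (Xv k * f) = Xv (Suc k) * ddiff k f + f"
proof (rule ddiff_unique)
  have e: "(Xv k - Xv (Suc k)) * ddiff k f = f - spoly k f" by (rule ddiff_eq)
  show "(Xv k - Xv (Suc k)) * (Xv (Suc k) * ddiff k f + f) = Xv k * f - spoly k (Xv k * f)"
    using e by simp algebra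
qed

lemma ddiff_spoly_far: "Suc k < l \<or> Suc l < k \<Longrightarrow> ddiff k (spoly l f) = spoly l (ddiff k f)"
proof (rule ddiff_unique)
  assume a: "Suc k < l \<or> Suc l < k"
  have "spoly l ((Xv k - Xv (Suc k)) * ddiff k f) = spoly l (f - spoly k f)" by (simp add: ddiff_eq)
  then show "(Xv k - Xv (Suc k)) * spoly l (ddiff k f) = spoly l f - spoly k (spoly l f)"
    using a by (auto simp: spoly_comm)
qed

lemma ddiff_far: "Suc k < l \<or> Suc l < k \<Longrightarrow> ddiff k (ddiff l f) = ddiff l (ddiff k f)"
proof -
  assume a: "Suc k < l \<or> Suc l < k"
  have s: "spoly k (Xv l - Xv (Suc l)) = Xv l - Xv (Suc l)" using a by auto
  have "(Xv l - Xv (Suc l)) * ddiff k (ddiff l f) = ddiff k ((Xv l - Xv (Suc l)) * ddiff l f)"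
    by (simp add: ddiff_lin_sym[OF s])
  also have "\<dots> = ddiff k f - spoly l (ddiff k f)"
    using a by (simp add: ddiff_eq ddiff_diff ddiff_spoly_far)
  also have "\<dots> = (Xv l - Xv (Suc l)) * ddiff l (ddiff k f)" by (simp add: ddiff_eq)
  finally show ?thesis using XX_nz[of l "Suc l"] by simp
qed

lemma swp_SSk1[simp]: "swp k (Suc (Suc k)) = Suc (Suc k)" by (simp add: swp_def)
lemma swp_k2[simp]: "swp (Suc k) k = k" by (simp add: swp_def)

lemma ddiff_braid: "ddiff k (ddiff (Suc k) (ddiff k f)) = ddiff (Suc k) (ddiff k (ddiff (Suc k) f))"
proof -
  define x1 where "x1 = Xv k"
  define x2 where "x2 = Xv (Suc k)"
  define x3 where "x3 = Xv (Suc (Suc k))"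
  define V where "V = (x1 - x2) * (x1 - x3) * (x2 - x3)"
  have V: "V \<noteq> 0" unfolding V_def x1_def x2_def x3_def by (simp add: XX_nz Xv_inj)
  let ?s1 = "spoly k" and ?s2 = "spoly (Suc k)"
  define a where "a = ddiff k f"
  define b where "b = ddiff (Suc k) a"
  define c where "c = ddiff k b"
  have E1: "(x1 - x2) * a = f - ?s1 f" unfolding a_def x1_def x2_def by (rule ddiff_eq)
  have E1s2: "(x1 - x3) * ?s2 a = ?s2 f - ?s2 (?s1 f)" using arg_cong[OF E1, of ?s2]
    unfolding x1_def x2_def x3_def by simp
  have E1s12: "(x2 - x3) * ?s1 (?s2 a) = ?s1 (?s2 f) - ?s1 (?s2 (?s1 f))" using arg_cong[OF E1s2, of ?s1]
    unfolding x1_def x2_def x3_def by simp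
  have E2: "(x2 - x3) * b = a - ?s2 a" unfolding b_def x2_def x3_def by (rule ddiff_eq)
  have sa: "?s1 a = a" unfolding a_def by (rule ddiff_sym)
  have E2s1: "(x1 - x3) * ?s1 b = a - ?s1 (?s2 a)" using arg_cong[OF E2, of ?s1] sa
    unfolding x1_def x2_def x3_def by simp
  have E3: "(x1 - x2) * c = b - ?s1 b" unfolding c_def x1_def x2_def by (rule ddiff_eq)
  have L: "V * c = f - ?s1 f - ?s2 f + ?s2 (?s1 f) + ?s1 (?s2 f) - ?s1 (?s2 (?s1 f))"
    unfolding V_def using E1 E1s2 E1s12 E2 E2s1 E3 by algebra
  define a' where "a' = ddiff (Suc k) f"
  define b' where "b' = ddiff k a'"
  define c' where "c' = ddiff (Suc k) b'"
  have F1: "(x2 - x3) * a' = f - ?s2 f" unfolding a'_def x3_def x2_def by (rule ddiff_eq)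
  have F1s1: "(x1 - x3) * ?s1 a' = ?s1 f - ?s1 (?s2 f)" using arg_cong[OF F1, of ?s1]
    unfolding x1_def x2_def x3_def by simp
  have F1s21: "(x1 - x2) * ?s2 (?s1 a') = ?s2 (?s1 f) - ?s2 (?s1 (?s2 f))" using arg_cong[OF F1s1, of ?s2]
    unfolding x1_def x2_def x3_def by simp
  have F2: "(x1 - x2) * b' = a' - ?s1 a'" unfolding b'_def x1_def x2_def by (rule ddiff_eq)
  have sa': "?s2 a' = a'" unfolding a'_def by (rule ddiff_sym)
  have F2s2: "(x1 - x3) * ?s2 b' = a' - ?s2 (?s1 a')" using arg_cong[OF F2, of ?s2] sa'
    unfolding x1_def x2_def x3_def by simp
  have F3: "(x2 - x3) * c' = b' - ?s2 b'" unfolding c'_def x2_def x3_def by (rule ddiff_eq)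
  have R: "V * c' = f - ?s2 f - ?s1 f + ?s1 (?s2 f) + ?s2 (?s1 f) - ?s2 (?s1 (?s2 f))"
    unfolding V_def using F1 F1s1 F1s21 F2 F2s2 F3 by algebra
  have "V * c = V * c'" using L R spoly_braid[of k f] by simp
  then show ?thesis using V unfolding c_def c'_def b_def b'_def a_def a'_def by simp
qed

lemma s12_ddiff: "spoly k (spoly (Suc k) (ddiff k f)) = ddiff (Suc k) (spoly k (spoly (Suc k) f))"
proof (rule ddiff_unique[symmetric])
  have "spoly k (spoly (Suc k) ((Xv k - Xv (Suc k)) * ddiff k f)) = spoly k (spoly (Suc k) (f - spoly k f))"
    by (simp add: ddiff_eq)
  then show "(Xv (Suc k) - Xv (Suc (Suc k))) * spoly k (spoly (Suc k) (ddiff k f)) =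
    spoly k (spoly (Suc k) f) - spoly (Suc k) (spoly k (spoly (Suc k) f))"
    by (simp add: spoly_braid)
qed

lemma s21_ddiff: "spoly (Suc k) (spoly k (ddiff (Suc k) f)) = ddiff k (spoly (Suc k) (spoly k f))"
proof (rule ddiff_unique[symmetric])
  have "spoly (Suc k) (spoly k ((Xv (Suc k) - Xv (Suc (Suc k))) * ddiff (Suc k) f)) = spoly (Suc k) (spoly k (f - spoly (Suc k) f))"
    by (simp add: ddiff_eq)
  then show "(Xv k - Xv (Suc k)) * spoly (Suc k) (spoly k (ddiff (Suc k) f)) =
    spoly (Suc k) (spoly k f) - spoly k (spoly (Suc k) (spoly k f))"
    by (simp add: spoly_braid)
qed

definition dp :: "('v \<Rightarrow> 'v \<Rightarrow> bool) \<Rightarrow> ('v \<Rightarrow> 'v \<Rightarrow> bool) \<Rightarrow> 'v \<Rightarrow> 'v \<Rightarrow> nat \<Rightarrow> ipoly \<Rightarrow> ipoly" where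
  "dp E Or a b k f = (if a = b then ddiff k f else if dotp E a b = 0 then spoly k f
      else if Or b a then spoly k f else (Xv k + Xv (Suc k)) * spoly k f)"

lemma delta_poly_dp: "delta_poly E Or k i f = dp E Or (ent i k) (ent i (Suc k)) k f"
  by (simp add: delta_poly_def dp_def)

definition qq :: "bool \<Rightarrow> nat \<Rightarrow> nat \<Rightarrow> ipoly" where
  "qq c u v = (if c then Xv u + Xv v else 1)"

lemma qq_comm: "qq c u v = qq c v u" by (simp add: qq_def add.commute)
lemma spoly_qq[simp]: "spoly j (qq c u v) = qq c (swp j u) (swp j v)" by (simp add: qq_def)

lemma dp_alt: "a \<noteq> b \<Longrightarrow> dp E Or a b k f = qq (E a b \<and> \<not> Or b a) k (Suc k) * spoly k f"
  by (auto simp: dp_def dotp_def qq_def)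
lemma dp_eq: "dp E Or a a k f = ddiff k f"
  by (simp add: dp_def)

locale orient =
  fixes E Or :: "'v \<Rightarrow> 'v \<Rightarrow> bool"
  assumes E_sym: "\<And>a b. E a b \<Longrightarrow> E b a"
    and Or_edge: "\<And>a b. Or a b \<Longrightarrow> E a b"
    and Or_orient: "\<And>a b. E a b \<Longrightarrow> Or a b \<noteq> Or b a"
begin

lemma R3_poly: "dp E Or b a k (dp E Or a b k f) =
  (if a = b then 0 else if dotp E a b = 0 then f else (Xv k + Xv (Suc k)) * f)"
proof (cases "a = b")
  case True then show ?thesis by (simp add: dp_eq ddiff_ddiff)
next
  case False
  have q: "qq c (Suc k) k = qq c k (Suc k)" for c by (rule qq_comm)
  have "dp E Or b a k (dp E Or a b k f) = qq (E b a \<and> \<not> Or a b) k (Suc k) * qq (E a b \<and> \<not> Or b a) k (Suc k) * f"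
    using False by (simp add: dp_alt q)
  also have "\<dots> = (if dotp E a b = 0 then f else (Xv k + Xv (Suc k)) * f)"
    using False E_sym[of a b] E_sym[of b a] Or_orient[of a b] by (auto simp: qq_def dotp_def)
  finally show ?thesis using False by simp
qed

lemma R4a_poly: "l \<noteq> k \<Longrightarrow> l \<noteq> Suc k \<Longrightarrow> dp E Or a b k (Xv l * f) = Xv l * dp E Or a b k f"
  by (cases "a = b") (simp_all add: dp_eq dp_alt ddiff_lin_sym)

lemma R4b_poly: "a \<noteq> b \<Longrightarrow> dp E Or a b k (Xv k * f) = Xv (Suc k) * dp E Or a b k f \<and>
    dp E Or a b k (Xv (Suc k) * f) = Xv k * dp E Or a b k f"
  by (simp add: dp_alt)

lemma R4c_poly: "Xv k * dp E Or a a k f - dp E Or a a k (Xv (Suc k) * f) = f \<and>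
    dp E Or a a k (Xv k * f) - Xv (Suc k) * dp E Or a a k f = f"
  by (simp add: dp_eq ddiff_XSk ddiff_Xk)

lemma R5_poly: "Suc k < l \<or> Suc l < k \<Longrightarrow> dp E Or c d k (dp E Or a b l f) = dp E Or a b l (dp E Or c d k f)"
proof -
  assume far: "Suc k < l \<or> Suc l < k"
  have sw1: "swp k l = l" "swp k (Suc l) = Suc l" "swp l k = k" "swp l (Suc k) = Suc k" using far by (auto simp: swp_def)
  have "ddiff k (qq x l (Suc l) * g) = qq x l (Suc l) * ddiff k g" for x g
    by (rule ddiff_lin_sym) (simp add: sw1)
  moreover have "ddiff l (qq x k (Suc k) * g) = qq x k (Suc k) * ddiff l g" for x g
    by (rule ddiff_lin_sym) (simp add: sw1)
  moreover have far2: "Suc l < k \<or> Suc k < l" using far by auto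
  ultimately show ?thesis
    by (cases "a = b"; cases "c = d")
      (simp_all add: dp_eq dp_alt ddiff_far[OF far] ddiff_spoly_far[OF far] ddiff_spoly_far[OF far2] sw1 spoly_comm[OF far] algebra_simps)
qed

end

context orient begin

abbreviation "s1 k \<equiv> spoly k"

lemma braid_aac:
  assumes "a \<noteq> c"
  shows "dp E Or a c k (dp E Or a c (Suc k) (dp E Or a a k f)) = dp E Or a a (Suc k) (dp E Or a c k (dp E Or a c (Suc k) f))"
proof -
  define u where "u = (E a c \<and> \<not> Or c a)"
  define P where "P = qq u k (Suc k) * qq u k (Suc (Suc k))"
  have sP: "spoly (Suc k) P = P" unfolding P_def by (simp add: qq_comm mult.commute)
  have L: "dp E Or a c k (dp E Or a c (Suc k) (dp E Or a a k f)) = P * spoly k (spoly (Suc k) (ddiff k f))"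
    using assms by (simp add: dp_alt dp_eq P_def u_def)
  have R: "dp E Or a a (Suc k) (dp E Or a c k (dp E Or a c (Suc k) f)) = ddiff (Suc k) (P * spoly k (spoly (Suc k) f))"
    using assms by (simp add: dp_alt dp_eq P_def u_def mult.assoc)
  show ?thesis unfolding L R ddiff_lin_sym[OF sP] s12_ddiff ..
qed

lemma braid_abb:
  assumes "a \<noteq> b"
  shows "dp E Or b b k (dp E Or a b (Suc k) (dp E Or a b k f)) = dp E Or a b (Suc k) (dp E Or a b k (dp E Or b b (Suc k) f))"
proof -
  define u where "u = (E a b \<and> \<not> Or b a)"
  define P where "P = qq u (Suc k) (Suc (Suc k)) * qq u k (Suc (Suc k))"
  have sP: "spoly k P = P" unfolding P_def by (simp add: qq_comm mult.commute)
  have L: "dp E Or b b k (dp E Or a b (Suc k) (dp E Or a b k f)) = ddiff k (P * spoly (Suc k) (spoly k f))"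
    using assms by (simp add: dp_alt dp_eq P_def u_def mult.assoc)
  have R: "dp E Or a b (Suc k) (dp E Or a b k (dp E Or b b (Suc k) f)) = P * spoly (Suc k) (spoly k (ddiff (Suc k) f))"
    using assms by (simp add: dp_alt dp_eq P_def u_def mult.assoc)
  show ?thesis unfolding L R ddiff_lin_sym[OF sP] s21_ddiff ..
qed

lemma braid_abc:
  assumes "a \<noteq> b" "b \<noteq> c" "a \<noteq> c"
  shows "dp E Or b c k (dp E Or a c (Suc k) (dp E Or a b k f)) = dp E Or a b (Suc k) (dp E Or a c k (dp E Or b c (Suc k) f))"
  using assms by (simp add: dp_alt spoly_braid qq_comm ac_simps)

lemma braid_aba:
  assumes "a \<noteq> b"
  shows "dp E Or b a k (dp E Or a a (Suc k) (dp E Or a b k f)) - dp E Or a b (Suc k) (dp E Or a a k (dp E Or b a (Suc k) f))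
     = (if dotp E a b = -1 then f else 0)"
proof -
  define u where "u = (E a b \<and> \<not> Or b a)"
  define v where "v = (E b a \<and> \<not> Or a b)"
  define x1 where "x1 = Xv k"
  define x2 where "x2 = Xv (Suc k)"
  define x3 where "x3 = Xv (Suc (Suc k))"
  define w where "w = spoly k (spoly (Suc k) (spoly k f))"
  have w': "spoly (Suc k) (spoly k (spoly (Suc k) f)) = w" unfolding w_def by (simp add: spoly_braid)
  define g1 where "g1 = ddiff (Suc k) (qq u k (Suc k) * spoly k f)"
  define g2 where "g2 = ddiff k (qq v (Suc k) (Suc (Suc k)) * spoly (Suc k) f)"
  have L: "dp E Or b a k (dp E Or a a (Suc k) (dp E Or a b k f)) = qq v k (Suc k) * spoly k g1"
    using assms by (simp add: dp_alt dp_eq u_def v_def g1_def)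
  have R: "dp E Or a b (Suc k) (dp E Or a a k (dp E Or b a (Suc k) f)) = qq u (Suc k) (Suc (Suc k)) * spoly (Suc k) g2"
    using assms by (simp add: dp_alt dp_eq u_def v_def g2_def)
  have G1: "(x2 - x3) * g1 = qq u k (Suc k) * spoly k f - spoly (Suc k) (qq u k (Suc k) * spoly k f)"
    unfolding g1_def x2_def x3_def by (rule ddiff_eq)
  have G1s: "(x1 - x3) * spoly k g1 = qq u k (Suc k) * f - qq u (Suc k) (Suc (Suc k)) * w"
    using arg_cong[OF G1, of "spoly k"] unfolding x1_def x2_def x3_def w_def by (simp add: qq_comm)
  have G2: "(x1 - x2) * g2 = qq v (Suc k) (Suc (Suc k)) * spoly (Suc k) f - spoly k (qq v (Suc k) (Suc (Suc k)) * spoly (Suc k) f)"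
    unfolding g2_def x1_def x2_def by (rule ddiff_eq)
  have G2s: "(x1 - x3) * spoly (Suc k) g2 = qq v (Suc k) (Suc (Suc k)) * f - qq v k (Suc k) * w"
    using arg_cong[OF G2, of "spoly (Suc k)"] unfolding x1_def x2_def x3_def w' [symmetric] by (simp add: qq_comm)
  have M: "(x1 - x3) * (qq v k (Suc k) * spoly k g1 - qq u (Suc k) (Suc (Suc k)) * spoly (Suc k) g2)
     = (qq v k (Suc k) * qq u k (Suc k) - qq u (Suc k) (Suc (Suc k)) * qq v (Suc k) (Suc (Suc k))) * f"
    using G1s G2s by algebra
  have Q: "qq v k (Suc k) * qq u k (Suc k) - qq u (Suc k) (Suc (Suc k)) * qq v (Suc k) (Suc (Suc k))
      = (if dotp E a b = -1 then x1 - x3 else 0)"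
    using assms E_sym[of a b] E_sym[of b a] Or_orient[of a b] unfolding u_def v_def x1_def x3_def
    by (auto simp: qq_def dotp_def)
  have "(x1 - x3) * (qq v k (Suc k) * spoly k g1 - qq u (Suc k) (Suc (Suc k)) * spoly (Suc k) g2)
      = (x1 - x3) * (if dotp E a b = -1 then f else 0)"
    unfolding M Q by simp
  moreover have "x1 - x3 \<noteq> 0" unfolding x1_def x3_def by (simp add: XX_nz Xv_inj)
  ultimately show ?thesis unfolding L R by simp
qed

lemma R6_poly:
  "dp E Or b c k (dp E Or a c (Suc k) (dp E Or a b k f)) - dp E Or a b (Suc k) (dp E Or a c k (dp E Or b c (Suc k) f))
    = (if a = c \<and> dotp E a b = -1 then f else 0)"
proof -
  consider "a = b" "b = c" | "a = b" "b \<noteq> c" | "a \<noteq> b" "b = c" | "a \<noteq> b" "b \<noteq> c" "a = c"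
    | "a \<noteq> b" "b \<noteq> c" "a \<noteq> c" by blast
  then show ?thesis
  proof cases
    case 1 then show ?thesis by (simp add: dp_eq ddiff_braid dotp_def)
  next
    case 2 then show ?thesis using braid_aac[of a c k f] by simp
  next
    case 3 then show ?thesis using braid_abb[of a b k f] by simp
  next
    case 4 then show ?thesis using braid_aba[of a b k f] by simp
  next
    case 5 then show ?thesis using braid_abc[of a b c k f] by simp
  qed
qed

end

lemma length_sseq[simp]: "length (sseq k is) = length is"
  by (simp add: sseq_def)

lemma nth_sseq: "1 \<le> k \<Longrightarrow> k < length is \<Longrightarrow> j < length is \<Longrightarrow>
  sseq k is ! j = (if j = k then is ! (k - 1) else if j = k - 1 then is ! k else is ! j)"
  by (auto simp: sseq_def nth_list_update)

lemma ent_sseq: "1 \<le> k \<Longrightarrow> k < length is \<Longrightarrow> 1 \<le> j \<Longrightarrow> j \<le> length is \<Longrightarrow>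
  ent (sseq k is) j = (if j = k then ent is (Suc k) else if j = Suc k then ent is k else ent is j)"
  unfolding ent_def by (subst nth_sseq) auto

lemma sseq_sseq: "1 \<le> k \<Longrightarrow> k < length is \<Longrightarrow> sseq k (sseq k is) = is"
  by (rule nth_equalityI) (auto simp: nth_sseq)

lemma sseq_id: "1 \<le> k \<Longrightarrow> k < length is \<Longrightarrow> ent is k = ent is (Suc k) \<Longrightarrow> sseq k is = is"
  by (rule nth_equalityI) (auto simp: nth_sseq ent_def)

lemma sseq_comm: "1 \<le> k \<Longrightarrow> k < length is \<Longrightarrow> 1 \<le> l \<Longrightarrow> l < length is \<Longrightarrow> Suc k < l \<or> Suc l < k \<Longrightarrow>
   sseq k (sseq l is) = sseq l (sseq k is)"
proof (rule nth_equalityI)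
  assume a: "1 \<le> k" "k < length is" "1 \<le> l" "l < length is" "Suc k < l \<or> Suc l < k"
  fix j assume "j < length (sseq k (sseq l is))"
  then have j: "j < length is" by simp
  have d: "k \<noteq> l" "k \<noteq> l - 1" "k - 1 \<noteq> l" "k - 1 \<noteq> l - 1" using a by auto
  show "sseq k (sseq l is) ! j = sseq l (sseq k is) ! j"
    using a j d by (simp add: nth_sseq)
qed simp

lemma sseq_braid: "1 \<le> k \<Longrightarrow> Suc k < length is \<Longrightarrow>
   sseq k (sseq (Suc k) (sseq k is)) = sseq (Suc k) (sseq k (sseq (Suc k) is))"
  by (rule nth_equalityI) (auto simp: nth_sseq)

lemma sseq_braid_id: "1 \<le> k \<Longrightarrow> Suc k < length is \<Longrightarrow> ent is k = ent is (Suc (Suc k)) \<Longrightarrow>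
   sseq k (sseq (Suc k) (sseq k is)) = is"
  by (rule nth_equalityI) (auto simp: nth_sseq ent_def)

lemma sseq_Seq: "is \<in> Seq \<nu> \<Longrightarrow> 1 \<le> k \<Longrightarrow> k < length is \<Longrightarrow> sseq k is \<in> Seq \<nu>"
proof -
  assume "is \<in> Seq \<nu>" "1 \<le> k" "k < length is"
  then have "mset (sseq k is) = mset is" unfolding sseq_def by (simp add: mset_swap)
  then have "count_list (sseq k is) x = count_list is x" for x by (metis count_mset)
  with \<open>is \<in> Seq \<nu>\<close> show ?thesis by (simp add: Seq_def)
qed

lemma sum_fun_apply': "sum f S x = (\<Sum>i\<in>S. f i x)"
  by (induction S rule: infinite_finite_induct) auto

lemma pvars_delta: "pvars (delta_poly E Or k i f) \<subseteq> swp k ` pvars f \<union> pvars f \<union> {k, Suc k}"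
proof -
  have m: "pvars ((Xv k + Xv (Suc k)) * spoly k f) \<subseteq> swp k ` pvars f \<union> {k, Suc k}"
    using pvars_mult[of "Xv k + Xv (Suc k)" "spoly k f"] pvars_add[of "Xv k" "Xv (Suc k)"] pvars_spoly[of k f]
    by auto
  show ?thesis unfolding delta_poly_def
    using m pvars_ddiff[of k f] pvars_spoly[of k f] by auto
qed

lemma swp_range: "1 \<le> k \<Longrightarrow> k < m \<Longrightarrow> swp k ` {1..m} \<subseteq> {1..m}"
  by (auto simp: swp_def)

lemma Polnu_iff: "F \<in> Polnu \<nu> m \<longleftrightarrow> (\<forall>j. j \<notin> Seq \<nu> \<longrightarrow> F j = 0) \<and> (\<forall>j. pvars (F j) \<subseteq> {1..m})"
  by (simp add: Polnu_def)

theorem mainTheorem2: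
  fixes I :: "'v set" and E Or :: "'v \<Rightarrow> 'v \<Rightarrow> bool" and \<nu> :: "'v \<Rightarrow> nat" and m :: nat
  assumes finI: "finite I"
    and E_sym: "\<And>a b. E a b \<Longrightarrow> E b a"
    and E_irr: "\<And>a. \<not> E a a"
    and E_in: "\<And>a b. E a b \<Longrightarrow> a \<in> I \<and> b \<in> I"
    and Or_edge: "\<And>a b. Or a b \<Longrightarrow> E a b"
    and Or_orient: "\<And>a b. E a b \<Longrightarrow> Or a b \<noteq> Or b a"
    and nu_supp: "\<And>i. \<nu> i \<noteq> 0 \<Longrightarrow> i \<in> I"
    and m_def: "m = (\<Sum>i\<in>I. \<nu> i)"
  shows
   \<comment> \<open>the operators preserve Pol_nu\<close>
   "(\<forall>i\<in>Seq \<nu>. \<forall>F\<in>Polnu \<nu> m. one_op i F \<in> Polnu \<nu> m) \<and>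
    (\<forall>i\<in>Seq \<nu>. \<forall>k\<in>{1..m}. \<forall>F\<in>Polnu \<nu> m. x_op k i F \<in> Polnu \<nu> m) \<and>
    (\<forall>i\<in>Seq \<nu>. \<forall>k\<in>{1..<m}. \<forall>F\<in>Polnu \<nu> m. delta_op E Or k i F \<in> Polnu \<nu> m) \<and>
   \<comment> \<open>(R1)\<close>
    (\<forall>i\<in>Seq \<nu>. \<forall>j\<in>Seq \<nu>. \<forall>F\<in>Polnu \<nu> m.
        one_op i (one_op j F) = (if i = j then one_op i F else 0)) \<and>
    (\<forall>F\<in>Polnu \<nu> m. (\<Sum>i\<in>Seq \<nu>. one_op i F) = F) \<and>
    (\<forall>i\<in>Seq \<nu>. \<forall>k\<in>{1..m}. \<forall>F\<in>Polnu \<nu> m.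
        x_op k i F = one_op i (x_op k i (one_op i F))) \<and>
    (\<forall>i\<in>Seq \<nu>. \<forall>k\<in>{1..<m}. \<forall>F\<in>Polnu \<nu> m.
        delta_op E Or k i F = one_op (sseq k i) (delta_op E Or k i (one_op i F))) \<and>
   \<comment> \<open>(R2)\<close>
    (\<forall>i\<in>Seq \<nu>. \<forall>k\<in>{1..m}. \<forall>l\<in>{1..m}. \<forall>F\<in>Polnu \<nu> m.
        x_op k i (x_op l i F) = x_op l i (x_op k i F)) \<and>
   \<comment> \<open>(R3)\<close>
    (\<forall>i\<in>Seq \<nu>. \<forall>k\<in>{1..<m}. \<forall>F\<in>Polnu \<nu> m.
        delta_op E Or k (sseq k i) (delta_op E Or k i F) =
          (if ent i k = ent i (Suc k) then 0
           else if dotp E (ent i k) (ent i (Suc k)) = 0 then one_op i F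
           else x_op k i F + x_op (Suc k) i F)) \<and>
   \<comment> \<open>(R4)\<close>
    (\<forall>i\<in>Seq \<nu>. \<forall>k\<in>{1..<m}. \<forall>l\<in>{1..m}. \<forall>F\<in>Polnu \<nu> m.
        l \<noteq> k \<longrightarrow> l \<noteq> Suc k \<longrightarrow>
        delta_op E Or k i (x_op l i F) = x_op l (sseq k i) (delta_op E Or k i F)) \<and>
    (\<forall>i\<in>Seq \<nu>. \<forall>k\<in>{1..<m}. \<forall>F\<in>Polnu \<nu> m. ent i k \<noteq> ent i (Suc k) \<longrightarrow>
        delta_op E Or k i (x_op k i F) = x_op (Suc k) (sseq k i) (delta_op E Or k i F) \<and>
        delta_op E Or k i (x_op (Suc k) i F) = x_op k (sseq k i) (delta_op E Or k i F)) \<and>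
    (\<forall>i\<in>Seq \<nu>. \<forall>k\<in>{1..<m}. \<forall>F\<in>Polnu \<nu> m. ent i k = ent i (Suc k) \<longrightarrow>
        x_op k i (delta_op E Or k i F) - delta_op E Or k i (x_op (Suc k) i F) = one_op i F \<and>
        delta_op E Or k i (x_op k i F) - x_op (Suc k) i (delta_op E Or k i F) = one_op i F) \<and>
   \<comment> \<open>(R5)\<close>
    (\<forall>i\<in>Seq \<nu>. \<forall>k\<in>{1..<m}. \<forall>l\<in>{1..<m}. \<forall>F\<in>Polnu \<nu> m.
        (k > Suc l \<or> l > Suc k) \<longrightarrow>
        delta_op E Or k (sseq l i) (delta_op E Or l i F) =
        delta_op E Or l (sseq k i) (delta_op E Or k i F)) \<and>
   \<comment> \<open>(R6)\<close>
    (\<forall>i\<in>Seq \<nu>. \<forall>k\<in>{1..<m-1}. \<forall>F\<in>Polnu \<nu> m.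
        delta_op E Or k (sseq (Suc k) (sseq k i))
          (delta_op E Or (Suc k) (sseq k i) (delta_op E Or k i F))
        - delta_op E Or (Suc k) (sseq k (sseq (Suc k) i))
          (delta_op E Or k (sseq (Suc k) i) (delta_op E Or (Suc k) i F))
        = (if ent i k = ent i (Suc (Suc k)) \<and> dotp E (ent i k) (ent i (Suc k)) = -1
           then one_op i F else 0))"
proof -
  interpret orient E Or
    by unfold_locales (erule E_sym, erule Or_edge, erule Or_orient)
  have len: "length i = m" if "i \<in> Seq \<nu>" for i
  proof -
    have cnt: "count_list i x = \<nu> x" for x using that by (simp add: Seq_def)
    have "set i \<subseteq> I"
    proof
      fix x assume "x \<in> set i"
      then have "count_list i x \<noteq> 0" by (simp add: count_list_0_iff)
      then show "x \<in> I" using cnt nu_supp by metis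
    qed
    then have "sum (count_list i) I = length i" using finI by (rule sum_count_set)
    then show ?thesis using cnt m_def by simp
  qed
  have finSeq: "finite (Seq \<nu>)"
  proof (rule finite_subset)
    show "Seq \<nu> \<subseteq> {xs. set xs \<subseteq> I \<and> length xs = m}"
    proof
      fix xs assume xs: "xs \<in> Seq \<nu>"
      have "set xs \<subseteq> I"
      proof
        fix x assume "x \<in> set xs"
        then have "count_list xs x \<noteq> 0" by (simp add: count_list_0_iff)
        then show "x \<in> I" using xs nu_supp by (simp add: Seq_def)
      qed
      then show "xs \<in> {xs. set xs \<subseteq> I \<and> length xs = m}" using len[OF xs] by simp
    qed
    show "finite {xs. set xs \<subseteq> I \<and> length xs = m}" using finI by (rule finite_lists_length_eq)
  qed
  have C1: "\<forall>i\<in>Seq \<nu>. \<forall>F\<in>Polnu \<nu> m. one_op i F \<in> Polnu \<nu> m"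
  proof (intro ballI)
    fix i F assume i: "i \<in> Seq \<nu>" and F: "F \<in> Polnu \<nu> m"
    show "one_op i F \<in> Polnu \<nu> m" using i F unfolding Polnu_iff one_op_def by auto
  qed
  have C2: "\<forall>i\<in>Seq \<nu>. \<forall>k\<in>{1..m}. \<forall>F\<in>Polnu \<nu> m. x_op k i F \<in> Polnu \<nu> m"
  proof (intro ballI)
    fix i k F assume i: "i \<in> Seq \<nu>" and k: "k \<in> {1..m}" and F: "F \<in> Polnu \<nu> m"
    have Fi: "pvars (F i) \<subseteq> {1..m}" using F unfolding Polnu_iff by blast
    have "pvars (Xv k * F i) \<subseteq> {k} \<union> pvars (F i)" using pvars_mult[of "Xv k" "F i"] by simp
    then have "pvars (Xv k * F i) \<subseteq> {1..m}" using Fi k by auto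
    then show "x_op k i F \<in> Polnu \<nu> m" using i unfolding Polnu_iff x_op_def by auto
  qed
  have C3: "\<forall>i\<in>Seq \<nu>. \<forall>k\<in>{1..<m}. \<forall>F\<in>Polnu \<nu> m. delta_op E Or k i F \<in> Polnu \<nu> m"
  proof (intro ballI)
    fix i k F assume i: "i \<in> Seq \<nu>" and k: "k \<in> {1..<m}" and F: "F \<in> Polnu \<nu> m"
    have si: "sseq k i \<in> Seq \<nu>" using i k len[OF i] by (intro sseq_Seq) auto
    have "pvars (delta_poly E Or k i (F i)) \<subseteq> {1..m}"
      using pvars_delta[of E Or k i "F i"] swp_range[of k m] k F unfolding Polnu_iff by fastforce
    then show "delta_op E Or k i F \<in> Polnu \<nu> m" using si unfolding Polnu_iff delta_op_def by auto
  qed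
  have C4: "\<forall>i\<in>Seq \<nu>. \<forall>j\<in>Seq \<nu>. \<forall>F\<in>Polnu \<nu> m.
        one_op i (one_op j F) = (if i = j then one_op i F else 0)"
    by (auto simp: one_op_def fun_eq_iff)
  have C5: "\<forall>F\<in>Polnu \<nu> m. (\<Sum>i\<in>Seq \<nu>. one_op i F) = F"
  proof
    fix F assume F: "F \<in> Polnu \<nu> m"
    show "(\<Sum>i\<in>Seq \<nu>. one_op i F) = F"
    proof
      fix x
      have "(\<Sum>i\<in>Seq \<nu>. one_op i F) x = (\<Sum>i\<in>Seq \<nu>. if x = i then F i else 0)"
        by (simp add: sum_fun_apply' one_op_def)
      also have "\<dots> = (if x \<in> Seq \<nu> then F x else 0)" using finSeq by (simp add: sum.delta)
      also have "\<dots> = F x" using F unfolding Polnu_iff by auto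
      finally show "(\<Sum>i\<in>Seq \<nu>. one_op i F) x = F x" .
    qed
  qed
  have C6: "\<forall>i\<in>Seq \<nu>. \<forall>k\<in>{1..m}. \<forall>F\<in>Polnu \<nu> m.
        x_op k i F = one_op i (x_op k i (one_op i F))"
    by (auto simp: one_op_def x_op_def fun_eq_iff)
  have C7: "\<forall>i\<in>Seq \<nu>. \<forall>k\<in>{1..<m}. \<forall>F\<in>Polnu \<nu> m.
        delta_op E Or k i F = one_op (sseq k i) (delta_op E Or k i (one_op i F))"
    by (auto simp: one_op_def delta_op_def fun_eq_iff)
  have C8: "\<forall>i\<in>Seq \<nu>. \<forall>k\<in>{1..m}. \<forall>l\<in>{1..m}. \<forall>F\<in>Polnu \<nu> m.
        x_op k i (x_op l i F) = x_op l i (x_op k i F)"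
    by (auto simp: x_op_def fun_eq_iff ac_simps)
  have C9: "\<forall>i\<in>Seq \<nu>. \<forall>k\<in>{1..<m}. \<forall>F\<in>Polnu \<nu> m.
        delta_op E Or k (sseq k i) (delta_op E Or k i F) =
          (if ent i k = ent i (Suc k) then 0
           else if dotp E (ent i k) (ent i (Suc k)) = 0 then one_op i F
           else x_op k i F + x_op (Suc k) i F)"
  proof (intro ballI)
    fix i k F assume i: "i \<in> Seq \<nu>" and k: "k \<in> {1..<m}" and F: "F \<in> Polnu \<nu> m"
    have l: "length i = m" by (rule len[OF i])
    have e1: "ent (sseq k i) k = ent i (Suc k)" "ent (sseq k i) (Suc k) = ent i k"
      using k l by (simp_all add: ent_sseq)
    have ss: "sseq k (sseq k i) = i" using k l by (simp add: sseq_sseq)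
    have L: "delta_op E Or k (sseq k i) (delta_op E Or k i F) = (\<lambda>x. if x = i then
       dp E Or (ent i (Suc k)) (ent i k) k (dp E Or (ent i k) (ent i (Suc k)) k (F i)) else 0)"
      by (simp add: fun_eq_iff delta_op_def delta_poly_dp e1 ss)
    show "delta_op E Or k (sseq k i) (delta_op E Or k i F) =
          (if ent i k = ent i (Suc k) then 0
           else if dotp E (ent i k) (ent i (Suc k)) = 0 then one_op i F
           else x_op k i F + x_op (Suc k) i F)"
      unfolding L R3_poly
      by (cases "ent i k = ent i (Suc k)"; cases "dotp E (ent i k) (ent i (Suc k)) = 0")
        (simp_all add: fun_eq_iff one_op_def x_op_def algebra_simps)
  qed
  have C10: "\<forall>i\<in>Seq \<nu>. \<forall>k\<in>{1..<m}. \<forall>l\<in>{1..m}. \<forall>F\<in>Polnu \<nu> m.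
        l \<noteq> k \<longrightarrow> l \<noteq> Suc k \<longrightarrow>
        delta_op E Or k i (x_op l i F) = x_op l (sseq k i) (delta_op E Or k i F)"
  proof (intro ballI impI)
    fix i k l F assume i: "i \<in> Seq \<nu>" and k: "k \<in> {1..<m}" and "l \<in> {1..m}" and F: "F \<in> Polnu \<nu> m"
      and "l \<noteq> k" "l \<noteq> Suc k"
    then show "delta_op E Or k i (x_op l i F) = x_op l (sseq k i) (delta_op E Or k i F)"
      by (simp add: fun_eq_iff delta_op_def x_op_def delta_poly_dp R4a_poly)
  qed
  have C11: "\<forall>i\<in>Seq \<nu>. \<forall>k\<in>{1..<m}. \<forall>F\<in>Polnu \<nu> m. ent i k \<noteq> ent i (Suc k) \<longrightarrow>
        delta_op E Or k i (x_op k i F) = x_op (Suc k) (sseq k i) (delta_op E Or k i F) \<and>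
        delta_op E Or k i (x_op (Suc k) i F) = x_op k (sseq k i) (delta_op E Or k i F)"
  proof (intro ballI impI)
    fix i k F assume i: "i \<in> Seq \<nu>" and k: "k \<in> {1..<m}" and F: "F \<in> Polnu \<nu> m"
      and ne: "ent i k \<noteq> ent i (Suc k)"
    then show "delta_op E Or k i (x_op k i F) = x_op (Suc k) (sseq k i) (delta_op E Or k i F) \<and>
        delta_op E Or k i (x_op (Suc k) i F) = x_op k (sseq k i) (delta_op E Or k i F)"
      by (simp add: fun_eq_iff delta_op_def x_op_def delta_poly_dp R4b_poly)
  qed
  have C12: "\<forall>i\<in>Seq \<nu>. \<forall>k\<in>{1..<m}. \<forall>F\<in>Polnu \<nu> m. ent i k = ent i (Suc k) \<longrightarrow>
        x_op k i (delta_op E Or k i F) - delta_op E Or k i (x_op (Suc k) i F) = one_op i F \<and>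
        delta_op E Or k i (x_op k i F) - x_op (Suc k) i (delta_op E Or k i F) = one_op i F"
  proof (intro ballI impI)
    fix i k F assume i: "i \<in> Seq \<nu>" and k: "k \<in> {1..<m}" and F: "F \<in> Polnu \<nu> m"
      and eq: "ent i k = ent i (Suc k)"
    have ss: "sseq k i = i" using k len[OF i] eq by (intro sseq_id) auto
    have P: "Xv k * dp E Or (ent i k) (ent i k) k f - dp E Or (ent i k) (ent i k) k (Xv (Suc k) * f) = f \<and>
      dp E Or (ent i k) (ent i k) k (Xv k * f) - Xv (Suc k) * dp E Or (ent i k) (ent i k) k f = f" for f
      by (rule R4c_poly)
    show "x_op k i (delta_op E Or k i F) - delta_op E Or k i (x_op (Suc k) i F) = one_op i F \<and>
        delta_op E Or k i (x_op k i F) - x_op (Suc k) i (delta_op E Or k i F) = one_op i F"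
      using P[of "F i"] by (simp add: fun_eq_iff delta_op_def x_op_def one_op_def delta_poly_dp ss flip: eq)
  qed
  have C13: "\<forall>i\<in>Seq \<nu>. \<forall>k\<in>{1..<m}. \<forall>l\<in>{1..<m}. \<forall>F\<in>Polnu \<nu> m.
        (k > Suc l \<or> l > Suc k) \<longrightarrow>
        delta_op E Or k (sseq l i) (delta_op E Or l i F) =
        delta_op E Or l (sseq k i) (delta_op E Or k i F)"
  proof (intro ballI impI)
    fix i k l F assume i: "i \<in> Seq \<nu>" and k: "k \<in> {1..<m}" and l: "l \<in> {1..<m}" and F: "F \<in> Polnu \<nu> m"
      and far: "k > Suc l \<or> l > Suc k"
    have len_i: "length i = m" by (rule len[OF i])
    have e: "ent (sseq l i) k = ent i k" "ent (sseq l i) (Suc k) = ent i (Suc k)"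
      "ent (sseq k i) l = ent i l" "ent (sseq k i) (Suc l) = ent i (Suc l)"
      using k l far len_i by (auto simp: ent_sseq)
    have c: "sseq k (sseq l i) = sseq l (sseq k i)" using k l far len_i by (intro sseq_comm) auto
    have far': "Suc k < l \<or> Suc l < k" using far by auto
    show "delta_op E Or k (sseq l i) (delta_op E Or l i F) = delta_op E Or l (sseq k i) (delta_op E Or k i F)"
      by (simp add: fun_eq_iff delta_op_def delta_poly_dp e c R5_poly[OF far'])
  qed
  have C14: "\<forall>i\<in>Seq \<nu>. \<forall>k\<in>{1..<m-1}. \<forall>F\<in>Polnu \<nu> m.
        delta_op E Or k (sseq (Suc k) (sseq k i))
          (delta_op E Or (Suc k) (sseq k i) (delta_op E Or k i F))
        - delta_op E Or (Suc k) (sseq k (sseq (Suc k) i))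
          (delta_op E Or k (sseq (Suc k) i) (delta_op E Or (Suc k) i F))
        = (if ent i k = ent i (Suc (Suc k)) \<and> dotp E (ent i k) (ent i (Suc k)) = -1
           then one_op i F else 0)"
  proof (intro ballI)
    fix i k F assume i: "i \<in> Seq \<nu>" and k: "k \<in> {1..<m-1}" and F: "F \<in> Polnu \<nu> m"
    have len_i: "length i = m" by (rule len[OF i])
    have k1: "1 \<le> k" "Suc k < length i" using k len_i by auto
    have e: "ent (sseq k i) (Suc k) = ent i k" "ent (sseq k i) (Suc (Suc k)) = ent i (Suc (Suc k))"
      "ent (sseq (Suc k) (sseq k i)) k = ent i (Suc k)" "ent (sseq (Suc k) (sseq k i)) (Suc k) = ent i (Suc (Suc k))"
      "ent (sseq (Suc k) i) k = ent i k" "ent (sseq (Suc k) i) (Suc k) = ent i (Suc (Suc k))"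
      "ent (sseq k (sseq (Suc k) i)) (Suc k) = ent i k" "ent (sseq k (sseq (Suc k) i)) (Suc (Suc k)) = ent i (Suc k)"
      using k1 by (simp_all add: ent_sseq)
    have b: "sseq (Suc k) (sseq k (sseq (Suc k) i)) = sseq k (sseq (Suc k) (sseq k i))"
      using k1 by (simp add: sseq_braid)
    define L where "L = sseq k (sseq (Suc k) (sseq k i))"
    have LHS: "delta_op E Or k (sseq (Suc k) (sseq k i))
          (delta_op E Or (Suc k) (sseq k i) (delta_op E Or k i F))
        - delta_op E Or (Suc k) (sseq k (sseq (Suc k) i))
          (delta_op E Or k (sseq (Suc k) i) (delta_op E Or (Suc k) i F))
      = (\<lambda>x. if x = L then dp E Or (ent i (Suc k)) (ent i (Suc (Suc k))) k (dp E Or (ent i k) (ent i (Suc (Suc k))) (Suc k) (dp E Or (ent i k) (ent i (Suc k)) k (F i)))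
           - dp E Or (ent i k) (ent i (Suc k)) (Suc k) (dp E Or (ent i k) (ent i (Suc (Suc k))) k (dp E Or (ent i (Suc k)) (ent i (Suc (Suc k))) (Suc k) (F i))) else 0)"
      by (simp add: fun_eq_iff delta_op_def delta_poly_dp e b L_def)
    note LHS = LHS[unfolded R6_poly]
    show "delta_op E Or k (sseq (Suc k) (sseq k i))
          (delta_op E Or (Suc k) (sseq k i) (delta_op E Or k i F))
        - delta_op E Or (Suc k) (sseq k (sseq (Suc k) i))
          (delta_op E Or k (sseq (Suc k) i) (delta_op E Or (Suc k) i F))
        = (if ent i k = ent i (Suc (Suc k)) \<and> dotp E (ent i k) (ent i (Suc k)) = -1
           then one_op i F else 0)"
    proof (cases "ent i k = ent i (Suc (Suc k)) \<and> dotp E (ent i k) (ent i (Suc k)) = -1")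
      case True
      then have "L = i" unfolding L_def using k1 by (intro sseq_braid_id) auto
      then show ?thesis unfolding LHS using True by (simp add: fun_eq_iff one_op_def)
    next
      case False
      show ?thesis unfolding LHS if_not_P[OF False] by (simp add: fun_eq_iff)
    qed
  qed
  show ?thesis by (rule conjI[OF C1 conjI[OF C2 conjI[OF C3 conjI[OF C4 conjI[OF C5 conjI[OF C6 conjI[OF C7 conjI[OF C8 conjI[OF C9 conjI[OF C10 conjI[OF C11 conjI[OF C12 conjI[OF C13 C14]]]]]]]]]]]]])
qed

end
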